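(* Let $G$ be a finite group and $p$ a prime dividing $|G|$. The finite poset $\mathcal{A}_p(G)/G$ is conically contractible.
   Context: $\mathcal{A}_p(G)$ is the poset of non-trivial elementary abelian $p$-subgroups of $G$ ordered by inclusion, with $G$ acting by conjugation $A^g=g^{-1}Ag$. $\mathcal{A}_p(G)/G$ is the orbit poset: $\overline{A}\le\overline{B}$ iff there are $A_1\in\overline{A}$, $B_1\in\overline{B}$ with $A_1\le B_1$. A finite poset $X$ is conically contractible if there exist an order-preserving map $f:X\to X$ and a point $x_0\in X$ such that $x\le f(x)\ge x_0$ for all $x\in X$ (or the dual inequalities), so that $\mathrm{id}_X$ is homotopic to a constant map. *)

theory Defs
  imports "HOL-Algebra.Algebra"
begin

definition elem_abelian_psubgroup :: "('a, 'b) monoid_scheme \<Rightarrow> nat \<Rightarrow> 'a set \<Rightarrow> bool" where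
  "elem_abelian_psubgroup G p A \<longleftrightarrow>
     subgroup A G \<and> (\<forall>x\<in>A. \<forall>y\<in>A. x \<otimes>\<^bsub>G\<^esub> y = y \<otimes>\<^bsub>G\<^esub> x)
     \<and> (\<forall>x\<in>A. x [^]\<^bsub>G\<^esub> p = \<one>\<^bsub>G\<^esub>)"

definition A_p :: "('a, 'b) monoid_scheme \<Rightarrow> nat \<Rightarrow> 'a set set" where
  "A_p G p = {A. elem_abelian_psubgroup G p A \<and> A \<noteq> {\<one>\<^bsub>G\<^esub>}}"

definition conj_set :: "('a, 'b) monoid_scheme \<Rightarrow> 'a set \<Rightarrow> 'a \<Rightarrow> 'a set" where
  "conj_set G A g = (\<lambda>a. inv\<^bsub>G\<^esub> g \<otimes>\<^bsub>G\<^esub> a \<otimes>\<^bsub>G\<^esub> g) ` A"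

definition conj_orbit :: "('a, 'b) monoid_scheme \<Rightarrow> 'a set \<Rightarrow> 'a set set" where
  "conj_orbit G A = {conj_set G A g | g. g \<in> carrier G}"

definition A_p_orbits :: "('a, 'b) monoid_scheme \<Rightarrow> nat \<Rightarrow> 'a set set set" where
  "A_p_orbits G p = conj_orbit G ` A_p G p"

definition orbit_le :: "'a set set \<Rightarrow> 'a set set \<Rightarrow> bool" where
  "orbit_le S T \<longleftrightarrow> (\<exists>a\<in>S. \<exists>b\<in>T. a \<subseteq> b)"

definition conically_contractible :: "'c set \<Rightarrow> ('c \<Rightarrow> 'c \<Rightarrow> bool) \<Rightarrow> bool" where
  "conically_contractible P leq \<longleftrightarrow>
     (\<exists>f x0. x0 \<in> P \<and> f ` P \<subseteq> P
        \<and> (\<forall>x\<in>P. \<forall>y\<in>P. leq x y \<longrightarrow> leq (f x) (f y))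
        \<and> ((\<forall>x\<in>P. leq x (f x) \<and> leq x0 (f x)) \<or> (\<forall>x\<in>P. leq (f x) x \<and> leq (f x) x0)))"

end

theory Submission
  imports Defs
begin

lemma mk_action:
  fixes P :: "('g, 'm) monoid_scheme" and Y :: "'x set" and act :: "'g \<Rightarrow> 'x \<Rightarrow> 'x"
  assumes "group P"
    and cl: "\<And>g x. g \<in> carrier P \<Longrightarrow> x \<in> Y \<Longrightarrow> act g x \<in> Y"
    and one: "\<And>x. x \<in> Y \<Longrightarrow> act \<one>\<^bsub>P\<^esub> x = x"
    and mul: "\<And>g h x. g \<in> carrier P \<Longrightarrow> h \<in> carrier P \<Longrightarrow> x \<in> Y \<Longrightarrow> act (g \<otimes>\<^bsub>P\<^esub> h) x = act g (act h x)"
  shows "group_action P Y (\<lambda>g. \<lambda>x\<in>Y. act g x)"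
proof -
  interpret P: group P by fact
  have bij: "(\<lambda>x\<in>Y. act g x) \<in> Bij Y" if g: "g \<in> carrier P" for g
  proof -
    have inv: "act (inv\<^bsub>P\<^esub> g) (act g x) = x" "act g (act (inv\<^bsub>P\<^esub> g) x) = x" if "x \<in> Y" for x
      using mul[of "inv\<^bsub>P\<^esub> g" g x] mul[of g "inv\<^bsub>P\<^esub> g" x] g that one by auto
    have "bij_betw (act g) Y Y"
      by (rule bij_betwI[where g="act (inv\<^bsub>P\<^esub> g)"]) (use cl g inv in auto)
    then have "bij_betw (\<lambda>x\<in>Y. act g x) Y Y"
      by (metis (no_types, lifting) bij_betw_cong restrict_apply')
    then show ?thesis unfolding Bij_def by auto
  qed
  show ?thesis
    unfolding group_action_def group_hom_def group_hom_axioms_def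
  proof (intro conjI)
    show "group P" by fact
    show "group (BijGroup Y)" by (rule group_BijGroup)
    show "(\<lambda>g. \<lambda>x\<in>Y. act g x) \<in> hom P (BijGroup Y)"
    proof (rule homI)
      fix g assume "g \<in> carrier P" then show "(\<lambda>x\<in>Y. act g x) \<in> carrier (BijGroup Y)"
        using bij by (simp add: BijGroup_def)
    next
      fix g h assume gh: "g \<in> carrier P" "h \<in> carrier P"
      show "(\<lambda>x\<in>Y. act (g \<otimes>\<^bsub>P\<^esub> h) x) = (\<lambda>x\<in>Y. act g x) \<otimes>\<^bsub>BijGroup Y\<^esub> (\<lambda>x\<in>Y. act h x)"
        using bij[OF gh(1)] bij[OF gh(2)] gh
        by (auto simp: BijGroup_def compose_def mul cl intro!: ext)
    qed
  qed
qed

lemma (in group_action) fix_mod: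
  assumes fin: "finite E" and ord: "order G = p ^ n" and p: "Factorial_Ring.prime p"
  shows "card E mod p = card {x\<in>E. \<forall>g\<in>carrier G. \<phi> g x = x} mod p"
proof -
  define F where "F = {x\<in>E. \<forall>g\<in>carrier G. \<phi> g x = x}"
  define f where "f x = (if x \<in> F then 0 else (1::nat))" for x
  have grp: "group G" using group_hom group_hom.axioms(1) by blast
  have finG: "finite (carrier G)"
    using ord p unfolding order_def by (metis card_eq_0_iff not_prime_0 power_not_zero)
  have orbfix: "orbit G \<phi> x = {x}" if "x \<in> F" for x
    using that orbit_refl unfolding F_def orbit_def by auto
  have inner: "p dvd (\<Sum>y\<in>orb. f y)" if orb: "orb \<in> orbits G E \<phi>" for orb
  proof -
    obtain x where x: "x \<in> E" "orb = orbit G \<phi> x" using orb unfolding orbits_def by auto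
    have "card orb * card (stabilizer G \<phi> x) = p ^ n" using orbit_stabilizer_theorem[OF x(1)] x ord by simp
    then have cd: "card orb dvd p ^ n" by (metis dvd_triv_left)
    show ?thesis
    proof (cases "x \<in> F")
      case True then show ?thesis using orbfix x f_def by simp
    next
      case False
      have allnf: "y \<notin> F" if y: "y \<in> orb" for y
      proof
        assume yF: "y \<in> F"
        have yE: "y \<in> E" using yF F_def by auto
        have "x \<in> orbit G \<phi> y" using orbit_sym[OF x(1) yE] y x by auto
        then have "x = y" using orbfix[OF yF] by auto
        then show False using False yF by simp
      qed
      have "(\<Sum>y\<in>orb. f y) = card orb" using allnf f_def by simp
      moreover have "card orb \<noteq> 1"
      proof
        assume "card orb = 1"
        then obtain z where "orb = {z}" by (meson card_1_singletonE)
        moreover have "x \<in> orb" using x orbit_refl by auto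
        ultimately have "orb = {x}" by auto
        then have "\<forall>g\<in>carrier G. \<phi> g x = x" using x unfolding orbit_def by auto
        then show False using False x F_def by auto
      qed
      moreover obtain i where "card orb = p ^ i" using cd p
        by (auto simp: divides_primepow_nat)
      ultimately show ?thesis by (cases i) auto
    qed
  qed
  have "(\<Sum>orb\<in>orbits G E \<phi>. \<Sum>y\<in>orb. f y) = (\<Sum>y\<in>E. f y)" by (rule disjoint_sum[OF fin])
  moreover have "p dvd (\<Sum>orb\<in>orbits G E \<phi>. \<Sum>y\<in>orb. f y)" by (rule dvd_sum) (rule inner)
  ultimately have d: "p dvd (\<Sum>y\<in>E. f y)" by simp
  have "(\<Sum>y\<in>E. f y) = (\<Sum>y\<in>E-F. 1)"
    by (rule sum.mono_neutral_cong_right) (auto simp: f_def fin)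
  then have s: "(\<Sum>y\<in>E. f y) = card (E - F)" by simp
  have FY: "F \<subseteq> E" unfolding F_def by auto
  have c: "card E = card F + card (E - F)"
    using card_Diff_subset[OF finite_subset[OF FY fin] FY] card_mono[OF fin FY] by simp
  obtain k where "card (E - F) = p * k" using d s by (metis dvdE)
  then show ?thesis using c F_def by simp
qed

lemma mult_bound:
  fixes p :: nat
  assumes "Factorial_Ring.prime p" "p ^ j dvd n" "n > 0"
  shows "j \<le> multiplicity p n"
  using assms by (intro multiplicity_geI) (auto simp: prime_def)

context group begin

lemma card_dvd_sub:
  assumes "subgroup I G" "subgroup J G" "I \<subseteq> J"
  shows "card I dvd card J"
proof -
  interpret J: group "G\<lparr>carrier := J\<rparr>" using assms subgroup_imp_group by blast
  have "subgroup I (G\<lparr>carrier := J\<rparr>)" using subgroup_incl assms by blast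
  from J.lagrange[OF this] have "card (rcosets\<^bsub>G\<lparr>carrier := J\<rparr>\<^esub> I) * card I = card J"
    by (simp add: order_def)
  then show ?thesis by (metis dvd_triv_right)
qed

lemma sylow2:
  assumes fin: "finite (carrier G)" and p: "Factorial_Ring.prime p"
    and S: "subgroup S G" "card S = p ^ multiplicity p (order G)"
    and R: "subgroup R G" "card R = p ^ n"
  shows "\<exists>x\<in>carrier G. conj_set G R x \<subseteq> S"
proof -
  define P where "P = G\<lparr>carrier := R\<rparr>"
  interpret P: group P unfolding P_def using R subgroup_imp_group by blast
  have RG: "R \<subseteq> carrier G" using R subgroup.subset by blast
  have SG: "S \<subseteq> carrier G" using S subgroup.subset by blast
  have rc: "C \<subseteq> carrier G" if "C \<in> rcosets S" for C
    using that SG r_coset_subset_G unfolding RCOSETS_def by blast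
  have invP: "inv\<^bsub>P\<^esub> r = inv r" if "r \<in> R" for r
    unfolding P_def using m_inv_consistent[OF R(1) that] .
  have act: "group_action P (rcosets S) (\<lambda>r. \<lambda>C\<in>rcosets S. C #> inv r)"
  proof (rule mk_action)
    show "group P" by (rule P.group_axioms)
  next
    fix g C assume g: "g \<in> carrier P" and C: "C \<in> rcosets S"
    then obtain x where x: "x \<in> carrier G" "C = S #> x" unfolding RCOSETS_def by auto
    have gG: "g \<in> carrier G" using g RG P_def by auto
    show "C #> inv g \<in> rcosets S"
      using x gG SG by (simp add: coset_mult_assoc rcosetsI)
  next
    fix C assume C: "C \<in> rcosets S"
    show "C #> inv \<one>\<^bsub>P\<^esub> = C" using rc[OF C] by (simp add: P_def)
  next
    fix g h C assume g: "g \<in> carrier P" and h: "h \<in> carrier P" and C: "C \<in> rcosets S"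
    have gG: "g \<in> carrier G" "h \<in> carrier G" using g h RG P_def by auto
    show "C #> inv (g \<otimes>\<^bsub>P\<^esub> h) = C #> inv h #> inv g"
      using gG rc[OF C] by (simp add: P_def inv_mult_group coset_mult_assoc)
  qed
  have ordP: "order P = p ^ n" using R by (simp add: P_def order_def)
  have finX: "finite (rcosets S)" using fin unfolding RCOSETS_def by (simp add: finite_subset)
  have m: "card (rcosets S) mod p = card {C \<in> rcosets S. \<forall>r\<in>carrier P. (\<lambda>C\<in>rcosets S. C #> inv r) C = C} mod p"
    by (rule group_action.fix_mod[OF act finX ordP p])
  have ndvd: "\<not> p dvd card (rcosets S)"
  proof
    assume "p dvd card (rcosets S)"
    then have "p ^ Suc (multiplicity p (order G)) dvd card (rcosets S) * card S"
      using S by (simp add: mult.commute mult_dvd_mono)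
    then have "p ^ Suc (multiplicity p (order G)) dvd order G" using lagrange[OF S(1)] by simp
    moreover have "order G > 0" unfolding order_def using fin one_closed by (auto simp: card_gt_0_iff)
    ultimately have "Suc (multiplicity p (order G)) \<le> multiplicity p (order G)" by (rule mult_bound[OF p])
    then show False by simp
  qed
  have "{C \<in> rcosets S. \<forall>r\<in>carrier P. (\<lambda>C\<in>rcosets S. C #> inv r) C = C} \<noteq> {}"
  proof
    assume a: "{C \<in> rcosets S. \<forall>r\<in>carrier P. (\<lambda>C\<in>rcosets S. C #> inv r) C = C} = {}"
    have "card (rcosets S) mod p = 0" using m unfolding a by simp
    then show False using ndvd by (simp add: mod_eq_0_iff_dvd)
  qed
  then obtain C where C: "C \<in> rcosets S" "\<forall>r\<in>R. C #> inv r = C"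
    by (auto simp: P_def)
  then obtain x where x: "x \<in> carrier G" "C = S #> x" unfolding RCOSETS_def by auto
  have "x \<otimes> r \<otimes> inv x \<in> S" if r: "r \<in> R" for r
  proof -
    have rG: "r \<in> carrier G" "inv r \<in> R" using r RG R(1) subgroup.m_inv_closed by auto
    have "S #> x #> inv (inv r) = S #> x" using C x rG by auto
    then have "S #> (x \<otimes> r) = S #> x" using x rG SG by (simp add: coset_mult_assoc)
    then have "x \<otimes> r \<in> S #> x" using rcos_self[of "x \<otimes> r" S] S(1) x rG by auto
    then show ?thesis using subgroup.rcos_module_imp[OF S(1) is_group x(1)] by simp
  qed
  then have "conj_set G R (inv x) \<subseteq> S" unfolding conj_set_def using x by auto
  then show ?thesis using x by blast
qed

lemma center_nontriv:
  assumes p: "Factorial_Ring.prime p"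
    and S: "subgroup S G" "card S = p ^ a" "a > 0"
  shows "\<exists>z\<in>S. z \<noteq> \<one> \<and> (\<forall>h\<in>S. z \<otimes> h = h \<otimes> z)"
proof -
  define P where "P = G\<lparr>carrier := S\<rparr>"
  interpret P: group P unfolding P_def using S subgroup_imp_group by blast
  have SG: "S \<subseteq> carrier G" using S subgroup.subset by blast
  have act: "group_action P S (\<lambda>g. \<lambda>s\<in>S. g \<otimes> s \<otimes> inv g)"
  proof (rule mk_action)
    show "group P" by (rule P.group_axioms)
  next
    fix g s assume "g \<in> carrier P" "s \<in> S"
    then show "g \<otimes> s \<otimes> inv g \<in> S" using S(1) by (simp add: P_def subgroup.m_closed subgroup.m_inv_closed)
  next
    fix s assume "s \<in> S" then show "\<one>\<^bsub>P\<^esub> \<otimes> s \<otimes> inv \<one>\<^bsub>P\<^esub> = s" using SG by (auto simp: P_def)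
  next
    fix g h s assume "g \<in> carrier P" "h \<in> carrier P" "s \<in> S"
    then have "g \<in> carrier G" "h \<in> carrier G" "s \<in> carrier G" using SG by (auto simp: P_def)
    then show "g \<otimes>\<^bsub>P\<^esub> h \<otimes> s \<otimes> inv (g \<otimes>\<^bsub>P\<^esub> h) = g \<otimes> (h \<otimes> s \<otimes> inv h) \<otimes> inv g"
      by (simp add: P_def inv_mult_group m_assoc)
  qed
  have finS: "finite S" using S p by (metis card_eq_0_iff not_prime_0 power_not_zero)
  have ordP: "order P = p ^ a" using S by (simp add: P_def order_def)
  define F where "F = {s \<in> S. \<forall>g\<in>carrier P. (\<lambda>s\<in>S. g \<otimes> s \<otimes> inv g) s = s}"
  have m: "card S mod p = card F mod p"
    unfolding F_def by (rule group_action.fix_mod[OF act finS ordP p])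
  obtain k where k: "a = Suc k" using S(3) by (cases a) auto
  have "card S mod p = 0" using S(2) k by simp
  then have pF: "p dvd card F" using m by (simp add: dvd_eq_mod_eq_0)
  have oneS: "\<one> \<in> S" using S(1) by (rule subgroup.one_closed)
  have "g \<otimes> \<one> \<otimes> inv g = \<one>" if "g \<in> carrier P" for g
    using that SG by (auto simp: P_def)
  then have oneF: "\<one> \<in> F" unfolding F_def using oneS by simp
  have finF: "finite F" using finS unfolding F_def by auto
  have "card F \<noteq> 1"
    using pF p by (metis nat_dvd_1_iff_1 not_prime_1)
  moreover have "card F \<ge> 1" using oneF finF by (metis One_nat_def Suc_leI card_gt_0_iff empty_iff)
  ultimately have "F - {\<one>} \<noteq> {}"
  proof (intro notI)
    assume "card F \<noteq> 1" "1 \<le> card F" "F - {\<one>} = {}"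
    then have "F = {\<one>}" using oneF by auto
    then show False using \<open>card F \<noteq> 1\<close> by simp
  qed
  then obtain z where z: "z \<in> F" "z \<noteq> \<one>" by auto
  have "z \<otimes> h = h \<otimes> z" if h: "h \<in> S" for h
  proof -
    have zS: "z \<in> S" using z F_def by auto
    have "h \<otimes> z \<otimes> inv h = z" using z h unfolding F_def P_def by auto
    have hG: "h \<in> carrier G" and zG: "z \<in> carrier G" using h zS SG by auto
    have "h \<otimes> z = (h \<otimes> z \<otimes> inv h) \<otimes> h" using hG zG by (simp add: m_assoc)
    then show ?thesis using \<open>h \<otimes> z \<otimes> inv h = z\<close> by simp
  qed
  then show ?thesis using z F_def by auto
qed

end

definition cen :: "('a, 'b) monoid_scheme \<Rightarrow> 'a set \<Rightarrow> 'a set" where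
  "cen G A = {g \<in> carrier G. \<forall>a\<in>A. g \<otimes>\<^bsub>G\<^esub> a = a \<otimes>\<^bsub>G\<^esub> g}"

definition zc :: "('a, 'b) monoid_scheme \<Rightarrow> 'a set \<Rightarrow> 'a set" where
  "zc G H = {z \<in> H. \<forall>h\<in>H. z \<otimes>\<^bsub>G\<^esub> h = h \<otimes>\<^bsub>G\<^esub> z}"

definition om :: "('a, 'b) monoid_scheme \<Rightarrow> nat \<Rightarrow> 'a set \<Rightarrow> 'a set" where
  "om G p H = {z \<in> zc G H. z [^]\<^bsub>G\<^esub> p = \<one>\<^bsub>G\<^esub>}"

context group begin

lemma canc1 [simp]: "x \<in> carrier G \<Longrightarrow> y \<in> carrier G \<Longrightarrow> x \<otimes> (inv x \<otimes> y) = y"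
  by (simp add: m_assoc [symmetric])

lemma canc2 [simp]: "x \<in> carrier G \<Longrightarrow> y \<in> carrier G \<Longrightarrow> inv x \<otimes> (x \<otimes> y) = y"
  by (simp add: m_assoc [symmetric])

lemma sg_closed: "g \<in> carrier G \<Longrightarrow> a \<in> carrier G \<Longrightarrow> inv g \<otimes> a \<otimes> g \<in> carrier G"
  by simp

lemma sg_mult: "g \<in> carrier G \<Longrightarrow> a \<in> carrier G \<Longrightarrow> b \<in> carrier G \<Longrightarrow>
   inv g \<otimes> (a \<otimes> b) \<otimes> g = (inv g \<otimes> a \<otimes> g) \<otimes> (inv g \<otimes> b \<otimes> g)"
  by (simp add: m_assoc)

lemma sg_inj: "g \<in> carrier G \<Longrightarrow> a \<in> carrier G \<Longrightarrow> b \<in> carrier G \<Longrightarrow>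
   inv g \<otimes> a \<otimes> g = inv g \<otimes> b \<otimes> g \<Longrightarrow> a = b"
  by (metis inv_closed l_cancel m_closed r_cancel)

lemma sg_pow: "g \<in> carrier G \<Longrightarrow> a \<in> carrier G \<Longrightarrow>
   inv g \<otimes> (a [^] (n::nat)) \<otimes> g = (inv g \<otimes> a \<otimes> g) [^] n"
proof (induction n)
  case 0 then show ?case by simp
next
  case (Suc n)
  have "inv g \<otimes> (a [^] Suc n) \<otimes> g = inv g \<otimes> (a [^] n \<otimes> a) \<otimes> g" by simp
  also have "\<dots> = (inv g \<otimes> a [^] n \<otimes> g) \<otimes> (inv g \<otimes> a \<otimes> g)" using Suc.prems by (simp add: sg_mult)
  finally show ?case using Suc by simp
qed

lemma sg_surj: "g \<in> carrier G \<Longrightarrow> x \<in> carrier G \<Longrightarrow> x = inv g \<otimes> (g \<otimes> x \<otimes> inv g) \<otimes> g"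
  by (simp add: m_assoc)

lemma conj_comp: "A \<subseteq> carrier G \<Longrightarrow> g \<in> carrier G \<Longrightarrow> h \<in> carrier G \<Longrightarrow>
   conj_set G (conj_set G A g) h = conj_set G A (g \<otimes> h)"
  unfolding conj_set_def image_image
  by (intro image_cong refl) (auto simp: inv_mult_group m_assoc subsetD)

lemma conj_one: "A \<subseteq> carrier G \<Longrightarrow> conj_set G A \<one> = A"
  unfolding conj_set_def by (auto simp: subsetD image_iff)

lemma conj_mono: "A \<subseteq> B \<Longrightarrow> conj_set G A g \<subseteq> conj_set G B g"
  unfolding conj_set_def by auto

lemma conj_carrier: "A \<subseteq> carrier G \<Longrightarrow> g \<in> carrier G \<Longrightarrow> conj_set G A g \<subseteq> carrier G"
  unfolding conj_set_def by auto

lemma conj_inv_back: "A \<subseteq> carrier G \<Longrightarrow> g \<in> carrier G \<Longrightarrow> conj_set G (conj_set G A g) (inv g) = A"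
  by (simp add: conj_comp conj_one)

lemma conj_card: "A \<subseteq> carrier G \<Longrightarrow> g \<in> carrier G \<Longrightarrow> card (conj_set G A g) = card A"
  unfolding conj_set_def
  by (rule card_image) (auto intro!: inj_onI dest: sg_inj simp: subsetD)

lemma conj_mem: "a \<in> A \<Longrightarrow> inv g \<otimes> a \<otimes> g \<in> conj_set G A g"
  unfolding conj_set_def by auto

lemma conj_memE: "x \<in> conj_set G A g \<Longrightarrow> (\<And>a. a \<in> A \<Longrightarrow> x = inv g \<otimes> a \<otimes> g \<Longrightarrow> P) \<Longrightarrow> P"
  unfolding conj_set_def by auto

lemma conj_mem_iff: "A \<subseteq> carrier G \<Longrightarrow> g \<in> carrier G \<Longrightarrow> a \<in> carrier G \<Longrightarrow>
   (inv g \<otimes> a \<otimes> g \<in> conj_set G A g) = (a \<in> A)"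
  unfolding conj_set_def using sg_inj by (auto simp: subsetD)

lemma conj_subgroup: assumes "subgroup A G" "g \<in> carrier G" shows "subgroup (conj_set G A g) G"
proof -
  have AG: "A \<subseteq> carrier G" using assms subgroup.subset by blast
  show ?thesis
  proof (rule subgroupI)
    show "conj_set G A g \<subseteq> carrier G" using conj_carrier AG assms by blast
    show "conj_set G A g \<noteq> {}" unfolding conj_set_def using subgroup.one_closed[OF assms(1)] by auto
  next
    fix a assume "a \<in> conj_set G A g"
    then obtain x where x: "x \<in> A" "a = inv g \<otimes> x \<otimes> g" by (auto elim: conj_memE)
    have xG: "x \<in> carrier G" using x AG by auto
    have "inv a = inv g \<otimes> inv x \<otimes> g" using x xG assms
      by (simp add: inv_mult_group m_assoc)
    then show "inv a \<in> conj_set G A g" using x subgroup.m_inv_closed[OF assms(1)] conj_mem by metis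
  next
    fix a b assume "a \<in> conj_set G A g" "b \<in> conj_set G A g"
    then obtain x y where x: "x \<in> A" "a = inv g \<otimes> x \<otimes> g" and y: "y \<in> A" "b = inv g \<otimes> y \<otimes> g"
      by (auto elim!: conj_memE)
    have "a \<otimes> b = inv g \<otimes> (x \<otimes> y) \<otimes> g" using x y AG assms by (simp add: sg_mult subsetD)
    then show "a \<otimes> b \<in> conj_set G A g" using x y subgroup.m_closed[OF assms(1)] conj_mem by metis
  qed
qed

lemma conj_inter: "U \<subseteq> carrier G \<Longrightarrow> V \<subseteq> carrier G \<Longrightarrow> g \<in> carrier G \<Longrightarrow>
   conj_set G (U \<inter> V) g = conj_set G U g \<inter> conj_set G V g"
  unfolding conj_set_def by (auto dest: sg_inj simp: subsetD)

lemma cen_conj: assumes AG: "A \<subseteq> carrier G" and g: "g \<in> carrier G"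
  shows "conj_set G (cen G A) g = cen G (conj_set G A g)"
proof
  show "conj_set G (cen G A) g \<subseteq> cen G (conj_set G A g)"
  proof
    fix x assume "x \<in> conj_set G (cen G A) g"
    then obtain c where c: "c \<in> cen G A" "x = inv g \<otimes> c \<otimes> g" by (auto elim: conj_memE)
    have cG: "c \<in> carrier G" using c(1) unfolding cen_def by auto
    have "x \<otimes> y = y \<otimes> x" if y: "y \<in> conj_set G A g" for y
    proof -
      obtain a where a: "a \<in> A" "y = inv g \<otimes> a \<otimes> g" using y by (auto elim: conj_memE)
      have aG: "a \<in> carrier G" using a AG by auto
      have "c \<otimes> a = a \<otimes> c" using c a unfolding cen_def by auto
      then show ?thesis using a c aG cG g by (simp add: sg_mult[symmetric])
    qed
    then show "x \<in> cen G (conj_set G A g)" unfolding cen_def using c cG g by auto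
  qed
next
  show "cen G (conj_set G A g) \<subseteq> conj_set G (cen G A) g"
  proof
    fix x assume x: "x \<in> cen G (conj_set G A g)"
    have xG: "x \<in> carrier G" using x unfolding cen_def by auto
    define c where "c = g \<otimes> x \<otimes> inv g"
    have cG: "c \<in> carrier G" using xG g c_def by simp
    have xc: "x = inv g \<otimes> c \<otimes> g" unfolding c_def by (rule sg_surj[OF g xG])
    have "c \<otimes> a = a \<otimes> c" if a: "a \<in> A" for a
    proof -
      have aG: "a \<in> carrier G" using a AG by auto
      have "x \<otimes> (inv g \<otimes> a \<otimes> g) = (inv g \<otimes> a \<otimes> g) \<otimes> x"
        using x conj_mem[OF a] unfolding cen_def by auto
      then have e: "inv g \<otimes> (c \<otimes> a) \<otimes> g = inv g \<otimes> (a \<otimes> c) \<otimes> g"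
        using xc aG cG g by (simp add: sg_mult)
      show ?thesis using sg_inj[OF g m_closed[OF cG aG] m_closed[OF aG cG] e] .
    qed
    then have "c \<in> cen G A" unfolding cen_def using cG by auto
    then show "x \<in> conj_set G (cen G A) g" using xc conj_mem by metis
  qed
qed

lemma zc_conj: assumes HG: "H \<subseteq> carrier G" and g: "g \<in> carrier G"
  shows "conj_set G (zc G H) g = zc G (conj_set G H g)"
proof -
  have "zc G H = H \<inter> cen G H" unfolding zc_def cen_def using HG by auto
  moreover have "zc G (conj_set G H g) = conj_set G H g \<inter> cen G (conj_set G H g)"
    unfolding zc_def cen_def using conj_carrier[OF HG g] by auto
  moreover have "cen G H \<subseteq> carrier G" unfolding cen_def by auto
  ultimately show ?thesis using conj_inter[OF HG _ g] cen_conj[OF HG g] by simp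
qed

lemma om_conj: assumes HG: "H \<subseteq> carrier G" and g: "g \<in> carrier G"
  shows "conj_set G (om G p H) g = om G p (conj_set G H g)"
proof
  show "conj_set G (om G p H) g \<subseteq> om G p (conj_set G H g)"
  proof
    fix x assume "x \<in> conj_set G (om G p H) g"
    then obtain z where z: "z \<in> om G p H" "x = inv g \<otimes> z \<otimes> g" by (auto elim: conj_memE)
    have zG: "z \<in> carrier G" using z HG unfolding om_def zc_def by auto
    have "x \<in> zc G (conj_set G H g)" using zc_conj[OF HG g] z conj_mem[of z "zc G H"] unfolding om_def by auto
    moreover have "x [^] p = \<one>" using z zG g sg_pow[OF g zG, of p] unfolding om_def by simp
    ultimately show "x \<in> om G p (conj_set G H g)" unfolding om_def by auto
  qed
next
  show "om G p (conj_set G H g) \<subseteq> conj_set G (om G p H) g"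
  proof
    fix x assume x: "x \<in> om G p (conj_set G H g)"
    then have "x \<in> conj_set G (zc G H) g" using zc_conj[OF HG g] unfolding om_def by auto
    then obtain z where z: "z \<in> zc G H" "x = inv g \<otimes> z \<otimes> g" by (auto elim: conj_memE)
    have zG: "z \<in> carrier G" using z HG unfolding zc_def by auto
    have "inv g \<otimes> (z [^] p) \<otimes> g = inv g \<otimes> \<one> \<otimes> g"
      using x z sg_pow[OF g zG, of p] g unfolding om_def by simp
    then have "z [^] p = \<one>" using sg_inj[OF g nat_pow_closed[OF zG] one_closed] by blast
    then have "z \<in> om G p H" using z unfolding om_def by auto
    then show "x \<in> conj_set G (om G p H) g" using z conj_mem by metis
  qed
qed

end

context group begin

lemma pow_in_sub: "subgroup H G \<Longrightarrow> x \<in> H \<Longrightarrow> x [^] (n::nat) \<in> H"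
  by (induction n) (auto simp: subgroup.one_closed subgroup.m_closed)

lemma pow_p_mod:
  fixes p :: nat
  assumes "a \<in> carrier G" "a [^] p = \<one>"
  shows "a [^] (n::nat) = a [^] (n mod p)"
proof -
  have "a [^] n = a [^] (p * (n div p) + n mod p)" by simp
  also have "\<dots> = a [^] (p * (n div p)) \<otimes> a [^] (n mod p)"
    using nat_pow_mult[OF assms(1), of "p * (n div p)" "n mod p"] by simp
  also have "\<dots> = (a [^] p) [^] (n div p) \<otimes> a [^] (n mod p)"
    using nat_pow_pow[OF assms(1), of p "n div p"] by simp
  finally show ?thesis using assms by simp
qed

lemma pow_gen:
  fixes p k :: nat
  assumes p: "Factorial_Ring.prime p" and D: "subgroup D G" and a: "a \<in> carrier G" "a [^] p = \<one>"
    and k: "0 < k" "k < p" "a [^] k \<in> D"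
  shows "a \<in> D"
proof -
  have "\<not> p dvd k" using k by (auto dest: dvd_imp_le)
  then have "coprime p k" using p prime_imp_coprime by blast
  then have g: "gcd k p = 1" by (simp add: coprime_iff_gcd_eq_1 gcd.commute)
  obtain x y where xy: "k * x = p * y + 1" using bezout_nat[of k p] k g by auto
  have "(a [^] k) [^] x = a [^] (p * y + 1)" using a by (simp add: nat_pow_pow xy)
  also have "\<dots> = a [^] (p * y) \<otimes> a [^] (1::nat)"
    using nat_pow_mult[OF a(1), of "p * y" 1] by simp
  also have "\<dots> = (a [^] p) [^] y \<otimes> a [^] (1::nat)"
    using nat_pow_pow[OF a(1), of p y] by simp
  also have "\<dots> = a" using a by simp
  finally show ?thesis using pow_in_sub[OF D k(3)] by metis
qed

lemma ea_step:
  fixes p :: nat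
  assumes p: "Factorial_Ring.prime p" and A: "subgroup A G" and comm: "\<forall>x\<in>A. \<forall>y\<in>A. x \<otimes> y = y \<otimes> x"
    and ex: "\<forall>x\<in>A. x [^] p = \<one>"
    and D: "subgroup D G" "D \<subseteq> A" "finite D" and a: "a \<in> A" "a \<notin> D"
  shows "\<exists>E. subgroup E G \<and> E \<subseteq> A \<and> card E = p * card D"
proof -
  have AG: "A \<subseteq> carrier G" using A subgroup.subset by blast
  have aG: "a \<in> carrier G" using a AG by auto
  have ap: "a [^] p = \<one>" using ex a by auto
  have p0: "p > 0" using p prime_gt_0_nat by blast
  define E where "E = (\<lambda>(d, i). d \<otimes> a [^] i) ` (D \<times> {..<p})"
  have aiA: "a [^] (i::nat) \<in> A" for i using pow_in_sub[OF A a(1)] .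
  have dA: "d \<in> A" if "d \<in> D" for d using that D by auto
  have lc: "a [^] (i::nat) \<otimes> (d \<otimes> y) = d \<otimes> (a [^] i \<otimes> y)" if "d \<in> A" "y \<in> carrier G" for i d y
  proof -
    have c: "a [^] i \<otimes> d = d \<otimes> a [^] i" using comm aiA that by blast
    have dG: "d \<in> carrier G" using that AG by auto
    have "a [^] i \<otimes> (d \<otimes> y) = (a [^] i \<otimes> d) \<otimes> y" using dG aG that by (simp add: m_assoc)
    also have "\<dots> = (d \<otimes> a [^] i) \<otimes> y" by (simp only: c)
    also have "\<dots> = d \<otimes> (a [^] i \<otimes> y)" using dG aG that by (simp add: m_assoc)
    finally show ?thesis .
  qed
  have memE: "d \<otimes> a [^] (i::nat) \<in> E" if "d \<in> D" for d i
  proof -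
    have "d \<otimes> a [^] i = d \<otimes> a [^] (i mod p)" using pow_p_mod[OF aG ap, of i] by simp
    moreover have "(d, i mod p) \<in> D \<times> {..<p}" using that p0 by auto
    ultimately show ?thesis unfolding E_def by force
  qed
  have EA: "E \<subseteq> A" unfolding E_def using A dA aiA by (auto intro: subgroup.m_closed)
  have Esub: "subgroup E G"
  proof (rule subgroupI)
    show "E \<subseteq> carrier G" using EA AG by auto
    show "E \<noteq> {}" unfolding E_def using subgroup.one_closed[OF D(1)] p0 by auto
  next
    fix x assume "x \<in> E"
    then obtain d i where di: "d \<in> D" "i < p" "x = d \<otimes> a [^] i" unfolding E_def by auto
    have dG: "d \<in> carrier G" using di dA AG by auto
    have "a [^] (p - i) \<otimes> a [^] i = \<one>" using di ap nat_pow_mult[OF aG, of "p - i" i] by simp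
    then have ia: "inv (a [^] i) = a [^] (p - i)" using aG by (simp add: inv_equality)
    have "inv x = inv (a [^] i) \<otimes> inv d" using di dG aG by (simp add: inv_mult_group)
    also have "\<dots> = inv d \<otimes> a [^] (p - i)"
      using ia comm aiA subgroup.m_inv_closed[OF D(1) di(1)] dA by auto
    finally show "inv x \<in> E" using memE subgroup.m_inv_closed[OF D(1) di(1)] by simp
  next
    fix x y assume "x \<in> E" "y \<in> E"
    then obtain d d' and i j :: nat where di: "d \<in> D" "x = d \<otimes> a [^] i" and dj: "d' \<in> D" "y = d' \<otimes> a [^] j"
      unfolding E_def by auto
    have dG: "d \<in> carrier G" "d' \<in> carrier G" using di dj dA AG by auto
    have "x \<otimes> y = d \<otimes> (a [^] i \<otimes> (d' \<otimes> a [^] j))" using di dj dG aG by (simp add: m_assoc)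
    also have "\<dots> = d \<otimes> (d' \<otimes> (a [^] i \<otimes> a [^] j))" using lc[of d' "a [^] j" i] dj dA aG by simp
    also have "\<dots> = (d \<otimes> d') \<otimes> a [^] (i + j)" using dG aG by (simp add: m_assoc nat_pow_mult)
    finally show "x \<otimes> y \<in> E" using memE subgroup.m_closed[OF D(1) di(1) dj(1)] by simp
  qed
  have inj: "inj_on (\<lambda>(d, i). d \<otimes> a [^] i) (D \<times> {..<p})"
  proof -
    have key: "d = d' \<and> i = j" if "d \<in> D" "d' \<in> D" "i < p" "j < p" "i \<le> j"
      "d \<otimes> a [^] i = d' \<otimes> a [^] j" for d d' i j
    proof -
      have dG: "d \<in> carrier G" "d' \<in> carrier G" using that dA AG by auto
      have "d' \<otimes> a [^] j = (d' \<otimes> a [^] (j - i)) \<otimes> a [^] i"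
        using that aG dG by (simp add: m_assoc nat_pow_mult)
      then have "d = d' \<otimes> a [^] (j - i)" using that aG dG by (metis m_closed nat_pow_closed right_cancel)
      then have e: "a [^] (j - i) = inv d' \<otimes> d" using aG dG by simp
      have "inv d' \<otimes> d \<in> D" using that D(1) by (simp add: subgroup.m_closed subgroup.m_inv_closed)
      then have "j - i = 0" using pow_gen[OF p D(1) aG ap, of "j - i"] e that a(2) by fastforce
      then show ?thesis using \<open>d = d' \<otimes> a [^] (j - i)\<close> that dG by auto
    qed
    show ?thesis
    proof (rule inj_onI)
      fix x y assume "x \<in> D \<times> {..<p}" "y \<in> D \<times> {..<p}"
        "(\<lambda>(d, i). d \<otimes> a [^] i) x = (\<lambda>(d, i). d \<otimes> a [^] i) y"
      moreover obtain d i d' j where xy: "x = (d, i)" "y = (d', j)" by (cases x, cases y) auto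
      ultimately have h: "d \<in> D" "d' \<in> D" "i < p" "j < p" "d \<otimes> a [^] i = d' \<otimes> a [^] j" by auto
      show "x = y"
      proof (cases "i \<le> j")
        case True then show ?thesis using key[OF h(1-4) True h(5)] xy by simp
      next
        case False then show ?thesis using key[OF h(2,1,4,3) _ h(5)[symmetric]] xy by simp
      qed
    qed
  qed
  have "card E = card (D \<times> {..<p})" unfolding E_def using inj by (rule card_image)
  also have "\<dots> = card D * p" by (simp add: card_cartesian_product)
  finally show ?thesis using Esub EA by (intro exI[of _ E]) auto
qed

lemma ea_card:
  fixes p :: nat
  assumes fin: "finite (carrier G)" and p: "Factorial_Ring.prime p"
    and ea: "elem_abelian_psubgroup G p A"
  shows "\<exists>k. card A = p ^ k"
proof -
  have A: "subgroup A G" and comm: "\<forall>x\<in>A. \<forall>y\<in>A. x \<otimes> y = y \<otimes> x" and ex: "\<forall>x\<in>A. x [^] p = \<one>"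
    using ea unfolding elem_abelian_psubgroup_def by auto
  have AG: "A \<subseteq> carrier G" using A subgroup.subset by blast
  have finA: "finite A" using AG fin finite_subset by blast
  define Q where "Q n = (\<exists>D. subgroup D G \<and> D \<subseteq> A \<and> card D = p ^ n)" for n
  have Q0: "Q 0" unfolding Q_def using triv_subgroup subgroup.one_closed[OF A] by (intro exI[of _ "{\<one>}"]) auto
  have bound: "n \<le> card A" if Qn: "Q n" for n
  proof -
    obtain D where D: "D \<subseteq> A" "card D = p ^ n" using Qn unfolding Q_def by auto
    have p2: "(2::nat) \<le> p" using p prime_ge_2_nat by blast
    have "n < 2 ^ n" by (rule less_exp)
    moreover have "(2::nat) ^ n \<le> p ^ n" using p2 by (rule power_mono) simp
    ultimately have "n < p ^ n" by linarith
    moreover have "card D \<le> card A" using D finA card_mono by blast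
    ultimately show ?thesis using D by simp
  qed
  obtain n where n: "Q n" "\<forall>m. Q m \<longrightarrow> m \<le> n"
    using Nat.ex_has_greatest_nat[of Q 0 "card A"] Q0 bound by blast
  then obtain D where D: "subgroup D G" "D \<subseteq> A" "card D = p ^ n" using Q_def by auto
  have "D = A"
  proof (rule ccontr)
    assume "D \<noteq> A"
    then obtain a where "a \<in> A" "a \<notin> D" using D by auto
    then obtain E where "subgroup E G" "E \<subseteq> A" "card E = p * card D"
      using ea_step[OF p A comm ex D(1,2) finite_subset[OF D(2) finA]] by blast
    then have "Q (Suc n)" using D unfolding Q_def by auto
    then show False using n by fastforce
  qed
  then show ?thesis using D by auto
qed

end

context group begin

lemma cen_subgroup: assumes AG: "A \<subseteq> carrier G" shows "subgroup (cen G A) G"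
proof (rule subgroupI)
  show "cen G A \<subseteq> carrier G" unfolding cen_def by auto
  show "cen G A \<noteq> {}" unfolding cen_def using AG by (auto intro!: exI[of _ \<one>] simp: subsetD)
next
  fix x assume x: "x \<in> cen G A"
  have xG: "x \<in> carrier G" using x unfolding cen_def by auto
  have "inv x \<otimes> a = a \<otimes> inv x" if a: "a \<in> A" for a
  proof -
    have aG: "a \<in> carrier G" using a AG by auto
    have e: "x \<otimes> a = a \<otimes> x" using x a unfolding cen_def by auto
    have "inv x \<otimes> a = inv x \<otimes> (a \<otimes> x) \<otimes> inv x" using xG aG by (simp add: m_assoc)
    also have "\<dots> = inv x \<otimes> (x \<otimes> a) \<otimes> inv x" by (simp only: e)
    also have "\<dots> = a \<otimes> inv x" using xG aG by simp
    finally show ?thesis .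
  qed
  then show "inv x \<in> cen G A" unfolding cen_def using xG by auto
next
  fix x y assume x: "x \<in> cen G A" and y: "y \<in> cen G A"
  have xG: "x \<in> carrier G" and yG: "y \<in> carrier G" using x y unfolding cen_def by auto
  have "x \<otimes> y \<otimes> a = a \<otimes> (x \<otimes> y)" if a: "a \<in> A" for a
  proof -
    have aG: "a \<in> carrier G" using a AG by auto
    have e1: "x \<otimes> a = a \<otimes> x" and e2: "y \<otimes> a = a \<otimes> y" using x y a unfolding cen_def by auto
    have "x \<otimes> y \<otimes> a = x \<otimes> (y \<otimes> a)" using xG yG aG by (simp add: m_assoc)
    also have "\<dots> = x \<otimes> (a \<otimes> y)" by (simp only: e2)
    also have "\<dots> = (x \<otimes> a) \<otimes> y" using xG yG aG by (simp add: m_assoc)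
    also have "\<dots> = (a \<otimes> x) \<otimes> y" by (simp only: e1)
    also have "\<dots> = a \<otimes> (x \<otimes> y)" using xG yG aG by (simp add: m_assoc)
    finally show ?thesis .
  qed
  then show "x \<otimes> y \<in> cen G A" unfolding cen_def using xG yG by auto
qed

lemma cen_anti: "A \<subseteq> B \<Longrightarrow> cen G B \<subseteq> cen G A"
  unfolding cen_def by auto

lemma zc_eq: "H \<subseteq> carrier G \<Longrightarrow> zc G H = H \<inter> cen G H"
  unfolding zc_def cen_def by auto

lemma zc_subgroup: assumes "subgroup H G" shows "subgroup (zc G H) G"
proof -
  have HG: "H \<subseteq> carrier G" using assms subgroup.subset by blast
  show ?thesis using zc_eq[OF HG] subgroups_Inter_pair[OF assms cen_subgroup[OF HG]] by simp
qed

lemma om_ea: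
  fixes p :: nat
  assumes H: "subgroup H G" shows "elem_abelian_psubgroup G p (om G p H)"
proof -
  have HG: "H \<subseteq> carrier G" using H subgroup.subset by blast
  have Z: "subgroup (zc G H) G" by (rule zc_subgroup[OF H])
  have zG: "z \<in> carrier G" if "z \<in> zc G H" for z using that HG unfolding zc_def by blast
  have comm: "x \<otimes> y = y \<otimes> x" if "x \<in> zc G H" "y \<in> zc G H" for x y
    using that unfolding zc_def by blast
  have sub: "subgroup (om G p H) G"
  proof (rule subgroupI)
    show "om G p H \<subseteq> carrier G" unfolding om_def using zG by auto
    show "om G p H \<noteq> {}" unfolding om_def using subgroup.one_closed[OF Z] by auto
  next
    fix a assume a: "a \<in> om G p H"
    have a1: "a \<in> zc G H" and a2: "a [^] p = \<one>" using a unfolding om_def by auto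
    have "inv a \<in> zc G H" using subgroup.m_inv_closed[OF Z a1] .
    moreover have "inv a [^] p = \<one>" using nat_pow_inv[OF zG[OF a1], of p] a2 by simp
    ultimately show "inv a \<in> om G p H" unfolding om_def by auto
  next
    fix a b assume a: "a \<in> om G p H" and b: "b \<in> om G p H"
    have a1: "a \<in> zc G H" and a2: "a [^] p = \<one>" using a unfolding om_def by auto
    have b1: "b \<in> zc G H" and b2: "b [^] p = \<one>" using b unfolding om_def by auto
    have "a \<otimes> b \<in> zc G H" using subgroup.m_closed[OF Z a1 b1] .
    moreover have "(a \<otimes> b) [^] p = \<one>"
      using pow_mult_distrib[OF comm[OF a1 b1] zG[OF a1] zG[OF b1], of p] a2 b2 by simp
    ultimately show "a \<otimes> b \<in> om G p H" unfolding om_def by blast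
  qed
  show ?thesis unfolding elem_abelian_psubgroup_def using sub comm unfolding om_def by auto
qed

lemma sylow1_sub:
  fixes p :: nat
  assumes fin: "finite (carrier G)" and p: "Factorial_Ring.prime p" and C: "subgroup C G"
  shows "\<exists>T. subgroup T G \<and> T \<subseteq> C \<and> card T = p ^ multiplicity p (card C)"
proof -
  interpret H: group "G\<lparr>carrier := C\<rparr>" using C subgroup_imp_group by blast
  have finC: "finite C" using C fin subgroup.subset finite_subset by blast
  have "order (G\<lparr>carrier := C\<rparr>) = p ^ multiplicity p (card C) * (card C div p ^ multiplicity p (card C))"
    by (simp add: order_def multiplicity_dvd)
  from sylow_thm[OF p H.group_axioms this] finC obtain T where
    T: "subgroup T (G\<lparr>carrier := C\<rparr>)" "card T = p ^ multiplicity p (card C)" by auto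
  have "subgroup T G" using incl_subgroup[OF C T(1)] .
  moreover have "T \<subseteq> C" using subgroup.subset[OF T(1)] by simp
  ultimately show ?thesis using T by blast
qed

lemma sylow2_sub:
  fixes p :: nat
  assumes fin: "finite (carrier G)" and p: "Factorial_Ring.prime p" and C: "subgroup C G"
    and S: "subgroup S G" "S \<subseteq> C" "card S = p ^ multiplicity p (card C)"
    and R: "subgroup R G" "R \<subseteq> C" "card R = p ^ n"
  shows "\<exists>x\<in>C. conj_set G R x \<subseteq> S"
proof -
  interpret H: group "G\<lparr>carrier := C\<rparr>" using C subgroup_imp_group by blast
  have finC: "finite C" using C fin subgroup.subset finite_subset by blast
  have SH: "subgroup S (G\<lparr>carrier := C\<rparr>)" using subgroup_incl[OF S(1) C S(2)] .
  have RH: "subgroup R (G\<lparr>carrier := C\<rparr>)" using subgroup_incl[OF R(1) C R(2)] .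
  have "\<exists>x\<in>carrier (G\<lparr>carrier := C\<rparr>). conj_set (G\<lparr>carrier := C\<rparr>) R x \<subseteq> S"
    by (rule H.sylow2[OF _ p SH _ RH R(3)]) (use finC S(3) in \<open>simp_all add: order_def\<close>)
  then obtain x where x: "x \<in> C" "conj_set (G\<lparr>carrier := C\<rparr>) R x \<subseteq> S" by auto
  have "conj_set (G\<lparr>carrier := C\<rparr>) R x = conj_set G R x"
    unfolding conj_set_def using m_inv_consistent[OF C x(1)] by simp
  then show ?thesis using x by auto
qed

lemma pgrp_bound:
  fixes p :: nat
  assumes fin: "finite (carrier G)" and p: "Factorial_Ring.prime p" and C: "subgroup C G"
    and U: "subgroup U G" "U \<subseteq> C" "card U = p ^ j"
  shows "card U \<le> p ^ multiplicity p (card C)"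
proof -
  have finC: "finite C" using C fin subgroup.subset finite_subset by blast
  have "card C > 0" using finC subgroup.one_closed[OF C] card_gt_0_iff by blast
  moreover have "p ^ j dvd card C" using card_dvd_sub[OF U(1) C U(2)] U(3) by simp
  ultimately have "j \<le> multiplicity p (card C)" using mult_bound[OF p] by blast
  then show ?thesis using U(3) p by (metis power_increasing prime_ge_1_nat)
qed

lemma sub_pgrp:
  fixes p :: nat
  assumes p: "Factorial_Ring.prime p" and U: "subgroup U G" and T: "subgroup T G" "U \<subseteq> T" "card T = p ^ a"
  shows "\<exists>j. card U = p ^ j"
  using card_dvd_sub[OF U T(1,2)] T(3) p by (auto simp: divides_primepow_nat)

end

lemma (in group) conj_cen_id: assumes AG: "A \<subseteq> carrier G" and c: "c \<in> cen G A"
  shows "conj_set G A c = A"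
proof -
  have cG: "c \<in> carrier G" using c unfolding cen_def by auto
  have e: "inv c \<otimes> a \<otimes> c = a" if a: "a \<in> A" for a
  proof -
    have aG: "a \<in> carrier G" using a AG by auto
    have ca: "c \<otimes> a = a \<otimes> c" using c a unfolding cen_def by blast
    have "inv c \<otimes> a \<otimes> c = inv c \<otimes> (a \<otimes> c)" using aG cG by (simp add: m_assoc)
    also have "\<dots> = inv c \<otimes> (c \<otimes> a)" by (simp only: ca)
    also have "\<dots> = a" using aG cG by simp
    finally show ?thesis .
  qed
  show ?thesis unfolding conj_set_def using e by (auto simp: image_iff)
qed

lemma (in group) conj_triv: "g \<in> carrier G \<Longrightarrow> conj_set G {\<one>} g = {\<one>}"
  unfolding conj_set_def by simp

lemma (in group) conj_Ap:
  fixes p :: nat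
  assumes A: "A \<in> A_p G p" and g: "g \<in> carrier G"
  shows "conj_set G A g \<in> A_p G p"
proof -
  have sub: "subgroup A G" and comm: "\<forall>x\<in>A. \<forall>y\<in>A. x \<otimes> y = y \<otimes> x" and ex: "\<forall>x\<in>A. x [^] p = \<one>"
    and nt: "A \<noteq> {\<one>}"
    using A unfolding A_p_def elem_abelian_psubgroup_def by auto
  have AG: "A \<subseteq> carrier G" using sub subgroup.subset by blast
  have "x \<otimes> y = y \<otimes> x" if xy: "x \<in> conj_set G A g" "y \<in> conj_set G A g" for x y
  proof -
    obtain a b where a: "a \<in> A" "x = inv g \<otimes> a \<otimes> g" and b: "b \<in> A" "y = inv g \<otimes> b \<otimes> g"
      using xy by (auto elim!: conj_memE)
    have aG: "a \<in> carrier G" and bG: "b \<in> carrier G" using a b AG by auto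
    have "a \<otimes> b = b \<otimes> a" using comm a b by blast
    then show ?thesis using a b sg_mult[OF g aG bG] sg_mult[OF g bG aG] by simp
  qed
  moreover have "x [^] p = \<one>" if xx: "x \<in> conj_set G A g" for x
  proof -
    obtain a where a: "a \<in> A" "x = inv g \<otimes> a \<otimes> g" using xx by (auto elim!: conj_memE)
    have aG: "a \<in> carrier G" using a AG by auto
    show ?thesis using sg_pow[OF g aG, of p] a ex g by simp
  qed
  moreover have "conj_set G A g \<noteq> {\<one>}"
  proof
    assume "conj_set G A g = {\<one>}"
    then have "conj_set G (conj_set G A g) (inv g) = {\<one>}" using conj_triv g by simp
    then show False using conj_inv_back[OF AG g] nt by simp
  qed
  ultimately show ?thesis using conj_subgroup[OF sub g]
    unfolding A_p_def elem_abelian_psubgroup_def by auto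
qed

locale cctx = group G for G (structure) +
  fixes p :: nat and S :: "'a set"
  assumes fin: "finite (carrier G)" and p: "Factorial_Ring.prime p"
    and S: "subgroup S G" and cardS: "card S = p ^ multiplicity p (order G)"
begin

definition good where
  "good A \<longleftrightarrow> A \<in> A_p G p \<and> A \<subseteq> S \<and> card (S \<inter> cen G A) = p ^ multiplicity p (card (cen G A))"

lemma SG: "S \<subseteq> carrier G" using S subgroup.subset by blast

lemma Ap_props:
  assumes "A \<in> A_p G p"
  shows "subgroup A G" "A \<subseteq> carrier G" "\<forall>x\<in>A. \<forall>y\<in>A. x \<otimes> y = y \<otimes> x" "\<forall>x\<in>A. x [^] p = \<one>" "A \<noteq> {\<one>}"
    "A \<subseteq> cen G A"
proof -
  show sub: "subgroup A G" and comm: "\<forall>x\<in>A. \<forall>y\<in>A. x \<otimes> y = y \<otimes> x" and "\<forall>x\<in>A. x [^] p = \<one>" "A \<noteq> {\<one>}"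
    using assms unfolding A_p_def elem_abelian_psubgroup_def by auto
  show AG: "A \<subseteq> carrier G" using sub subgroup.subset by blast
  show "A \<subseteq> cen G A" unfolding cen_def using AG comm by blast
qed

lemma exists_good:
  assumes A0: "A0 \<in> A_p G p"
  shows "\<exists>h\<in>carrier G. good (conj_set G A0 h)"
proof -
  note P = Ap_props[OF A0]
  define C0 where "C0 = cen G A0"
  have C0: "subgroup C0 G" unfolding C0_def using cen_subgroup[OF P(2)] .
  have C0G: "C0 \<subseteq> carrier G" using C0 subgroup.subset by blast
  obtain T where T: "subgroup T G" "T \<subseteq> C0" "card T = p ^ multiplicity p (card C0)"
    using sylow1_sub[OF fin p C0] by blast
  obtain k where k: "card A0 = p ^ k"
    using ea_card[OF fin p] A0 unfolding A_p_def by auto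
  obtain c where c: "c \<in> C0" "conj_set G A0 c \<subseteq> T"
    using sylow2_sub[OF fin p C0 T P(1) _ k] P(6) C0_def by blast
  have A0T: "A0 \<subseteq> T" using c conj_cen_id[OF P(2)] C0_def by simp
  obtain h where h: "h \<in> carrier G" "conj_set G T h \<subseteq> S"
    using sylow2[OF fin p S cardS T(1) T(3)] by blast
  define A where "A = conj_set G A0 h"
  have AAp: "A \<in> A_p G p" unfolding A_def using conj_Ap[OF A0 h(1)] .
  have AS: "A \<subseteq> S" unfolding A_def using conj_mono[OF A0T] h by blast
  have cenA: "cen G A = conj_set G C0 h" unfolding A_def C0_def using cen_conj[OF P(2) h(1)] by simp
  have cardcen: "card (cen G A) = card C0" using cenA conj_card[OF C0G h(1)] by simp
  have TS: "conj_set G T h \<subseteq> S \<inter> cen G A" using h(2) cenA conj_mono[OF T(2)] by blast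
  have TG: "T \<subseteq> carrier G" using T(1) subgroup.subset by blast
  have cenAsub: "subgroup (cen G A) G" using cen_subgroup Ap_props(2)[OF AAp] by blast
  have Isub: "subgroup (S \<inter> cen G A) G" using subgroups_Inter_pair[OF S cenAsub] .
  have finI: "finite (S \<inter> cen G A)" using fin SG finite_subset by blast
  have ge: "p ^ multiplicity p (card (cen G A)) \<le> card (S \<inter> cen G A)"
    using card_mono[OF finI TS] conj_card[OF TG h(1)] T(3) cardcen by simp
  obtain j where j: "card (S \<inter> cen G A) = p ^ j" using sub_pgrp[OF p Isub S _ cardS] by blast
  have le: "card (S \<inter> cen G A) \<le> p ^ multiplicity p (card (cen G A))"
    using pgrp_bound[OF fin p cenAsub Isub _ j] by blast
  have "good A" unfolding good_def using AAp AS ge le by simp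
  then show ?thesis using h(1) A_def by blast
qed

lemma good_W:
  assumes gA: "good A"
  shows "om G p (S \<inter> cen G A) \<in> A_p G p" "A \<subseteq> om G p (S \<inter> cen G A)"
    "om G p S \<subseteq> om G p (S \<inter> cen G A)"
proof -
  have AAp: "A \<in> A_p G p" and AS: "A \<subseteq> S" using gA unfolding good_def by auto
  note P = Ap_props[OF AAp]
  have cenAsub: "subgroup (cen G A) G" using cen_subgroup P(2) by blast
  have Isub: "subgroup (S \<inter> cen G A) G" using subgroups_Inter_pair[OF S cenAsub] .
  show AW: "A \<subseteq> om G p (S \<inter> cen G A)"
  proof
    fix a assume a: "a \<in> A"
    have "a \<in> S \<inter> cen G A" using a AS P(6) by blast
    moreover have "\<forall>h\<in>S \<inter> cen G A. a \<otimes> h = h \<otimes> a" using a unfolding cen_def by auto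
    ultimately have "a \<in> zc G (S \<inter> cen G A)" unfolding zc_def by blast
    then show "a \<in> om G p (S \<inter> cen G A)" unfolding om_def using a P(4) by blast
  qed
  obtain a where a: "a \<in> A" "a \<noteq> \<one>" using P(5) subgroup.one_closed[OF P(1)] by blast
  have "om G p (S \<inter> cen G A) \<noteq> {\<one>}" using a AW by blast
  then show "om G p (S \<inter> cen G A) \<in> A_p G p" unfolding A_p_def using om_ea[OF Isub] by blast
  show "om G p S \<subseteq> om G p (S \<inter> cen G A)"
  proof
    fix z assume z: "z \<in> om G p S"
    have zS: "z \<in> S" and zc: "\<forall>h\<in>S. z \<otimes> h = h \<otimes> z" and zp: "z [^] p = \<one>"
      using z unfolding om_def zc_def by auto
    have "z \<in> cen G A" unfolding cen_def using zS SG zc AS by blast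
    then have "z \<in> zc G (S \<inter> cen G A)" unfolding zc_def using zS zc by blast
    then show "z \<in> om G p (S \<inter> cen G A)" unfolding om_def using zp by blast
  qed
qed

end

context cctx begin

lemma mono_core:
  assumes gA: "good A" and gB: "good B" and k: "k \<in> carrier G" and A1: "conj_set G A k \<subseteq> B"
  shows "\<exists>g'\<in>carrier G. om G p (S \<inter> cen G A) \<subseteq> conj_set G (om G p (S \<inter> cen G B)) g'"
proof -
  have AAp: "A \<in> A_p G p" and AS: "A \<subseteq> S" and cTA: "card (S \<inter> cen G A) = p ^ multiplicity p (card (cen G A))"
    using gA unfolding good_def by auto
  have BAp: "B \<in> A_p G p" and BS: "B \<subseteq> S" and cQ: "card (S \<inter> cen G B) = p ^ multiplicity p (card (cen G B))"
    using gB unfolding good_def by auto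
  note PA = Ap_props[OF AAp] and PB = Ap_props[OF BAp]
  define TA where "TA = S \<inter> cen G A"
  define Q where "Q = S \<inter> cen G B"
  have cenAsub: "subgroup (cen G A) G" using cen_subgroup PA(2) by blast
  have cenBsub: "subgroup (cen G B) G" using cen_subgroup PB(2) by blast
  have TAsub: "subgroup TA G" unfolding TA_def using subgroups_Inter_pair[OF S cenAsub] .
  have Qsub: "subgroup Q G" unfolding Q_def using subgroups_Inter_pair[OF S cenBsub] .
  have QG: "Q \<subseteq> carrier G" using Qsub subgroup.subset by blast
  have TAG: "TA \<subseteq> carrier G" using TAsub subgroup.subset by blast
  have cenBG: "cen G B \<subseteq> carrier G" unfolding cen_def by auto
  have ik: "inv k \<in> carrier G" using k by simp
  have A1G: "conj_set G A k \<subseteq> carrier G" using conj_carrier[OF PA(2) k] .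
  have "Q \<subseteq> cen G (conj_set G A k)" unfolding Q_def using cen_anti[OF A1] by blast
  then have "conj_set G Q (inv k) \<subseteq> conj_set G (cen G (conj_set G A k)) (inv k)" by (rule conj_mono)
  also have "\<dots> = cen G (conj_set G (conj_set G A k) (inv k))" using cen_conj[OF A1G ik] .
  also have "\<dots> = cen G A" using conj_inv_back[OF PA(2) k] by simp
  finally have RcA: "conj_set G Q (inv k) \<subseteq> cen G A" .
  have Rsub: "subgroup (conj_set G Q (inv k)) G" using conj_subgroup[OF Qsub ik] .
  have cR: "card (conj_set G Q (inv k)) = p ^ multiplicity p (card (cen G B))"
    using conj_card[OF QG ik] cQ Q_def by simp
  obtain c where c: "c \<in> cen G A" "conj_set G (conj_set G Q (inv k)) c \<subseteq> TA"
    using sylow2_sub[OF fin p cenAsub TAsub _ _ Rsub RcA cR] cTA TA_def by blast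
  have cG: "c \<in> carrier G" using c(1) unfolding cen_def by auto
  define g' where "g' = inv k \<otimes> c"
  have g': "g' \<in> carrier G" unfolding g'_def using ik cG by simp
  define Q' where "Q' = conj_set G Q g'"
  have Q'TA: "Q' \<subseteq> TA" using c(2) conj_comp[OF QG ik cG] Q'_def g'_def by simp
  define CB' where "CB' = cen G (conj_set G B g')"
  have CB'eq: "CB' = conj_set G (cen G B) g'" unfolding CB'_def using cen_conj[OF PB(2) g'] by simp
  have CB'sub: "subgroup CB' G" unfolding CB'_def using cen_subgroup conj_carrier[OF PB(2) g'] by blast
  have cCB': "card CB' = card (cen G B)" using CB'eq conj_card[OF cenBG g'] by simp
  have cQ': "card Q' = p ^ multiplicity p (card CB')" using conj_card[OF QG g'] cQ Q_def Q'_def cCB' by simp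
  have Q'CB': "Q' \<subseteq> CB'" using CB'eq Q'_def conj_mono[of Q "cen G B" g'] Q_def by blast
  have BQ: "B \<subseteq> Q" unfolding Q_def using BS PB(6) by blast
  have B'Q': "conj_set G B g' \<subseteq> Q'" unfolding Q'_def using conj_mono[OF BQ] .
  define U where "U = TA \<inter> CB'"
  have Usub: "subgroup U G" unfolding U_def using subgroups_Inter_pair[OF TAsub CB'sub] .
  have finU: "finite U" unfolding U_def using TAG fin finite_subset by blast
  have Q'U: "Q' \<subseteq> U" unfolding U_def using Q'TA Q'CB' by blast
  have cTA': "card TA = p ^ multiplicity p (card (cen G A))" using cTA TA_def by simp
  obtain j where j: "card U = p ^ j" using sub_pgrp[OF p Usub TAsub _ cTA'] U_def by blast
  have UCB: "U \<subseteq> CB'" unfolding U_def by blast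
  have "card U \<le> card Q'" using pgrp_bound[OF fin p CB'sub Usub UCB j] cQ' by simp
  then have UQ': "U = Q'" using card_seteq[OF finU Q'U] by simp
  have zcTA: "zc G TA \<subseteq> Q'"
  proof
    fix z assume z: "z \<in> zc G TA"
    have zTA: "z \<in> TA" and zcomm: "\<forall>h\<in>TA. z \<otimes> h = h \<otimes> z" using z unfolding zc_def by auto
    have "z \<in> CB'" unfolding CB'_def cen_def using zTA TAG zcomm B'Q' Q'TA by blast
    then show "z \<in> Q'" using zTA UQ' U_def by blast
  qed
  have "om G p TA \<subseteq> om G p Q'"
  proof
    fix z assume z: "z \<in> om G p TA"
    have zz: "z \<in> zc G TA" and zp: "z [^] p = \<one>" using z unfolding om_def by auto
    have "z \<in> Q'" using zz zcTA by blast
    moreover have "\<forall>h\<in>Q'. z \<otimes> h = h \<otimes> z" using zz Q'TA unfolding zc_def by blast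
    ultimately have "z \<in> zc G Q'" unfolding zc_def by blast
    then show "z \<in> om G p Q'" unfolding om_def using zp by blast
  qed
  also have "om G p Q' = conj_set G (om G p Q) g'" unfolding Q'_def using om_conj[OF QG g'] by simp
  finally show ?thesis using g' TA_def Q_def by blast
qed

lemma x0_nontriv: assumes pd: "p dvd order G" shows "\<exists>w\<in>om G p S. w \<noteq> \<one>"
proof -
  define M where "M = multiplicity p (order G)"
  have ordpos: "order G > 0" unfolding order_def using fin one_closed by (auto simp: card_gt_0_iff)
  have "1 \<le> M" unfolding M_def using mult_bound[OF p _ ordpos, of 1] pd by simp
  then obtain z where z: "z \<in> S" "z \<noteq> \<one>" "\<forall>h\<in>S. z \<otimes> h = h \<otimes> z"
    using center_nontriv[OF p S, of M] cardS M_def by auto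
  have zzc: "z \<in> zc G S" unfolding zc_def using z by blast
  have zG: "z \<in> carrier G" using z SG by auto
  interpret H: group "G\<lparr>carrier := S\<rparr>" using S subgroup_imp_group by blast
  have "z [^]\<^bsub>G\<lparr>carrier := S\<rparr>\<^esub> order (G\<lparr>carrier := S\<rparr>) = \<one>\<^bsub>G\<lparr>carrier := S\<rparr>\<^esub>"
    using H.pow_order_eq_1[of z] z by simp
  then have zM: "z [^] (p ^ M) = \<one>" using cardS M_def nat_pow_consistent[of z] by (simp add: order_def)
  define j where "j = (LEAST j. z [^] (p ^ j) = \<one>)"
  have zj: "z [^] (p ^ j) = \<one>" unfolding j_def using LeastI[of "\<lambda>j. z [^] (p ^ j) = \<one>", OF zM] .
  have nl: "z [^] (p ^ i) \<noteq> \<one>" if "i < j" for i using not_less_Least[of i "\<lambda>j. z [^] (p ^ j) = \<one>"] that j_def by blast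
  have "j \<noteq> 0"
  proof
    assume "j = 0" then have "z [^] (1::nat) = \<one>" using zj by simp
    then show False using z(2) zG by simp
  qed
  then obtain i where i: "j = Suc i" by (cases j) auto
  define w where "w = z [^] (p ^ i)"
  have wzc: "w \<in> zc G S" unfolding w_def using pow_in_sub[OF zc_subgroup[OF S] zzc] .
  have "w [^] p = z [^] (p ^ i * p)" unfolding w_def using nat_pow_pow[OF zG] by simp
  also have "\<dots> = \<one>" using zj i by (simp add: mult.commute)
  finally have "w \<in> om G p S" unfolding om_def using wzc by blast
  moreover have "w \<noteq> \<one>" unfolding w_def using nl i by simp
  ultimately show ?thesis by blast
qed

lemma orbit_mem: "B \<subseteq> carrier G \<Longrightarrow> g \<in> carrier G \<Longrightarrow> conj_set G B g \<in> conj_orbit G B"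
  unfolding conj_orbit_def by blast

lemma orbit_self: "B \<subseteq> carrier G \<Longrightarrow> B \<in> conj_orbit G B"
  using orbit_mem[of B \<one>] conj_one by simp

lemma main:
  assumes pd: "p dvd order G"
  shows "conically_contractible (A_p_orbits G p) orbit_le"
proof -
  define P where "P = A_p_orbits G p"
  have ex: "\<exists>A. A \<in> x \<and> good A" if x: "x \<in> P" for x
  proof -
    obtain A0 where A0: "A0 \<in> A_p G p" "x = conj_orbit G A0" using x unfolding P_def A_p_orbits_def by auto
    obtain h where "h \<in> carrier G" "good (conj_set G A0 h)" using exists_good[OF A0(1)] by blast
    then show ?thesis using A0 orbit_mem Ap_props(2)[OF A0(1)] by blast
  qed
  define rep where "rep x = (SOME A. A \<in> x \<and> good A)" for x
  have rep: "rep x \<in> x" "good (rep x)" if "x \<in> P" for x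
    using someI_ex[OF ex[OF that]] unfolding rep_def by auto
  have repconj: "\<exists>g\<in>carrier G. a = conj_set G (rep x) g" if x: "x \<in> P" and a: "a \<in> x" for x a
  proof -
    obtain A0 where A0: "A0 \<in> A_p G p" "x = conj_orbit G A0" using x unfolding P_def A_p_orbits_def by auto
    have A0G: "A0 \<subseteq> carrier G" using Ap_props(2)[OF A0(1)] .
    obtain h where h: "h \<in> carrier G" "rep x = conj_set G A0 h" using rep(1)[OF x] A0 unfolding conj_orbit_def by auto
    obtain g where g: "g \<in> carrier G" "a = conj_set G A0 g" using a A0 unfolding conj_orbit_def by auto
    have "conj_set G (rep x) (inv h \<otimes> g) = conj_set G A0 (h \<otimes> (inv h \<otimes> g))"
      using h conj_comp[OF A0G h(1), of "inv h \<otimes> g"] g by simp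
    also have "\<dots> = a" using g h by simp
    finally show ?thesis using g h by (intro bexI[of _ "inv h \<otimes> g"]) auto
  qed
  define W where "W x = om G p (S \<inter> cen G (rep x))" for x
  define f where "f x = conj_orbit G (W x)" for x
  define x0 where "x0 = conj_orbit G (om G p S)"
  have WAp: "W x \<in> A_p G p" if "x \<in> P" for x unfolding W_def using good_W(1)[OF rep(2)[OF that]] .
  have WG: "W x \<subseteq> carrier G" if "x \<in> P" for x using Ap_props(2)[OF WAp[OF that]] .
  have omS: "om G p S \<in> A_p G p"
    using om_ea[OF S] x0_nontriv[OF pd] subgroup.one_closed unfolding A_p_def by blast
  have omSG: "om G p S \<subseteq> carrier G" using Ap_props(2)[OF omS] .
  have x0P: "x0 \<in> P" unfolding x0_def P_def A_p_orbits_def using omS by blast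
  have fP: "f ` P \<subseteq> P" unfolding f_def P_def A_p_orbits_def using WAp P_def A_p_orbits_def by blast
  have mono: "orbit_le (f x) (f y)" if x: "x \<in> P" and y: "y \<in> P" and le: "orbit_le x y" for x y
  proof -
    obtain a b where ab: "a \<in> x" "b \<in> y" "a \<subseteq> b" using le unfolding orbit_le_def by blast
    obtain g1 where g1: "g1 \<in> carrier G" "a = conj_set G (rep x) g1" using repconj[OF x ab(1)] by blast
    obtain g2 where g2: "g2 \<in> carrier G" "b = conj_set G (rep y) g2" using repconj[OF y ab(2)] by blast
    have AG: "rep x \<subseteq> carrier G" using Ap_props(2) rep(2)[OF x] unfolding good_def by blast
    have BG: "rep y \<subseteq> carrier G" using Ap_props(2) rep(2)[OF y] unfolding good_def by blast
    have "conj_set G (rep x) (g1 \<otimes> inv g2) = conj_set G a (inv g2)"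
      using conj_comp[OF AG g1(1), of "inv g2"] g1 g2 by simp
    also have "\<dots> \<subseteq> conj_set G b (inv g2)" using conj_mono[OF ab(3)] .
    also have "\<dots> = rep y" using conj_inv_back[OF BG g2(1)] g2 by simp
    finally have sub: "conj_set G (rep x) (g1 \<otimes> inv g2) \<subseteq> rep y" .
    obtain g' where g': "g' \<in> carrier G" "W x \<subseteq> conj_set G (W y) g'"
      using mono_core[OF rep(2)[OF x] rep(2)[OF y] _ sub] g1 g2 W_def by auto
    show ?thesis unfolding orbit_le_def f_def
      using orbit_self[OF WG[OF x]] orbit_mem[OF WG[OF y] g'(1)] g'(2) by blast
  qed
  have cone: "orbit_le x (f x) \<and> orbit_le x0 (f x)" if x: "x \<in> P" for x
  proof
    show "orbit_le x (f x)" unfolding orbit_le_def f_def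
      using rep(1)[OF x] orbit_self[OF WG[OF x]] good_W(2)[OF rep(2)[OF x]] W_def by blast
    show "orbit_le x0 (f x)" unfolding orbit_le_def f_def x0_def
      using orbit_self[OF omSG] orbit_self[OF WG[OF x]] good_W(3)[OF rep(2)[OF x]] W_def by blast
  qed
  show ?thesis unfolding conically_contractible_def P_def[symmetric]
    using x0P fP mono cone by blast
qed

end

theorem theorem4p3:
  fixes G :: "('a, 'b) monoid_scheme" and p :: nat
  assumes "group G" and "finite (carrier G)"
    and "Factorial_Ring.prime p" and "p dvd order G"
  shows "conically_contractible (A_p_orbits G p) orbit_le"
proof -
  interpret group G by fact
  have "order G = p ^ multiplicity p (order G) * (order G div p ^ multiplicity p (order G))"
    by (simp add: multiplicity_dvd)
  then obtain S where S: "subgroup S G" "card S = p ^ multiplicity p (order G)"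
    using sylow_thm[OF assms(3,1) _ assms(2)] by blast
  have "cctx G p S" unfolding cctx_def cctx_axioms_def using assms(1-3) S by blast
  then interpret cctx G p S .
  show ?thesis using main[OF assms(4)] .
qed


end
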